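(* Let $k\geq 3$ be an integer and $\ell\geq 2$ an even integer, and let $G_1^{\{\ell,k\}}$ and $G_2^{\{\ell,k\}}$ be the indistinguishability graphs (for any fixed permutation $\sigma\neq\mathrm{id}$ of $[k]$). Then both $G_1^{\{\ell,k\}}$ and $G_2^{\{\ell,k\}}$ admit a proper $k$-coloring (hence are $k$-partially $k$-colorable), $\Delta_{E(G_1^{\{\ell,k\}})}=\Delta_{E(G_2^{\{\ell,k\}})}=k$, and every $k$-partial $k$-coloring of $G_1^{\{\ell,k\}}$ (resp. $G_2^{\{\ell,k\}}$) is a proper $k$-coloring of that graph.
   Context: Let $[m]=\{1,\dots,m\}$. A $k$-partial $c$-coloring of a graph $H=(V,E)$ is a map $\gamma:V\to\{1,\dots,c\}$ such that every vertex $v$ has at least $\min\{k,\deg_H(v)\}$ neighbors $u$ with $\gamma(u)\neq\gamma(v)$. For a graph $H$ with at least one edge, $\Delta_{E(H)}=\max_{\{u,v\}\in E(H)}\min\{\deg_H(u),\deg_H(v)\}$. Path of cliques: for permutations $\tau_1,\dots,\tau_{\ell-1}$ of $[k]$, $P(\tau_1,\dots,\tau_{\ell-1})$ has vertex set $[k]\times[\ell]$ and edges $\{(a,i),(b,i)\}$ for $a\neq b$, $i\in[\ell]$, and $\{(a,i),(b,i+1)\}$ for $i\in[\ell-1]$, $a,b\in[k]$, $b\neq\tau_i(a)$. The $k$-edge-gadget transformation: given a graph $G$ and for each edge a chosen ordered pair $(u,v)$, keep all vertices of $G$, delete each edge $\{u,v\}$, and add $k$ new vertices $(u,v,1),\dots,(u,v,k)$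 forming a clique together with edges $\{u,(u,v,j)\}$ for $j=1,\dots,k-1$ and $\{v,(u,v,k)\}$. Indistinguishability graphs: let $G_1=P(\tau_1,\dots,\tau_{\ell-1})$ with all $\tau_i=\mathrm{id}$, and $G_2=P(\tau_1',\dots,\tau_{\ell-1}')$ with $\tau_i'=\mathrm{id}$ for $i\neq \ell/2$ and $\tau'_{\ell/2}=\sigma$, where $\sigma$ is a fixed permutation of $[k]$ different from the identity. $G_1^{\{\ell,k\}}$ (resp. $G_2^{\{\ell,k\}}$) is obtained from $G_1$ (resp. $G_2$) by the $k$-edge-gadget transformation, where an edge $\{(a,i),(b,i)\}$ with $a<b$ is oriented as $((a,i),(b,i))$ and an edge $\{(a,i),(b,i+1)\}$ is oriented as $((a,i),(b,i+1))$. *)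

theory Defs
  imports "HOL-Combinatorics.Permutations"
begin

definition nbrs :: "'v set set \<Rightarrow> 'v \<Rightarrow> 'v set" where
  "nbrs E v = {u. {u, v} \<in> E \<and> u \<noteq> v}"

definition deg :: "'v set set \<Rightarrow> 'v \<Rightarrow> nat" where
  "deg E v = card (nbrs E v)"

definition partial_coloring :: "nat \<Rightarrow> nat \<Rightarrow> 'v set \<Rightarrow> 'v set set \<Rightarrow> ('v \<Rightarrow> nat) \<Rightarrow> bool" where
  "partial_coloring k c V E \<gamma> \<longleftrightarrow>
     (\<forall>v\<in>V. \<gamma> v \<in> {1..c}) \<and>
     (\<forall>v\<in>V. card {u \<in> nbrs E v. \<gamma> u \<noteq> \<gamma> v} \<ge> min k (deg E v))"

definition proper_coloring :: "nat \<Rightarrow> 'v set \<Rightarrow> 'v set set \<Rightarrow> ('v \<Rightarrow> nat) \<Rightarrow> bool" where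
  "proper_coloring c V E \<gamma> \<longleftrightarrow>
     (\<forall>v\<in>V. \<gamma> v \<in> {1..c}) \<and>
     (\<forall>u v. {u, v} \<in> E \<and> u \<noteq> v \<longrightarrow> \<gamma> u \<noteq> \<gamma> v)"

definition Delta_E :: "'v set set \<Rightarrow> nat" where
  "Delta_E E = Max {min (deg E u) (deg E v) | u v. {u, v} \<in> E \<and> u \<noteq> v}"

text \<open>Vertices (a,i) with a \<in> [k], i \<in> [l]. Arcs: ((a,i),(b,i)) for a<b, and
 ((a,i),(b,i+1)) for b \<noteq> \<tau> i a. The underlying edges are exactly those of P(\<tau>_1,...,\<tau>_{l-1}).\<close>
definition poc_V :: "nat \<Rightarrow> nat \<Rightarrow> (nat \<times> nat) set" where
  "poc_V k l = {1..k} \<times> {1..l}"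

definition poc_arcs :: "nat \<Rightarrow> nat \<Rightarrow> (nat \<Rightarrow> nat \<Rightarrow> nat) \<Rightarrow> ((nat \<times> nat) \<times> (nat \<times> nat)) set" where
  "poc_arcs k l \<tau> =
     {((a, i), (b, i)) | a b i. a \<in> {1..k} \<and> b \<in> {1..k} \<and> a < b \<and> i \<in> {1..l}} \<union>
     {((a, i), (b, i + 1)) | a b i. a \<in> {1..k} \<and> b \<in> {1..k} \<and> i \<in> {1..l - 1} \<and> b \<noteq> \<tau> i a}"

datatype 'v gvert = Orig 'v | Gad 'v 'v nat

definition gadget_V :: "nat \<Rightarrow> 'v set \<Rightarrow> ('v \<times> 'v) set \<Rightarrow> 'v gvert set" where
  "gadget_V k V D = Orig ` V \<union> {Gad u v j | u v j. (u, v) \<in> D \<and> j \<in> {1..k}}"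

definition gadget_E :: "nat \<Rightarrow> ('v \<times> 'v) set \<Rightarrow> 'v gvert set set" where
  "gadget_E k D =
     {{Gad u v j, Gad u v j'} | u v j j'. (u, v) \<in> D \<and> j \<in> {1..k} \<and> j' \<in> {1..k} \<and> j \<noteq> j'} \<union>
     {{Orig u, Gad u v j} | u v j. (u, v) \<in> D \<and> j \<in> {1..k - 1}} \<union>
     {{Orig v, Gad u v k} | u v. (u, v) \<in> D}"

definition tau1 :: "nat \<Rightarrow> nat \<Rightarrow> nat" where
  "tau1 = (\<lambda>i. id)"

definition tau2 :: "nat \<Rightarrow> (nat \<Rightarrow> nat) \<Rightarrow> nat \<Rightarrow> nat \<Rightarrow> nat" where
  "tau2 l \<sigma> = (\<lambda>i. if i = l div 2 then \<sigma> else id)"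

definition G1_V :: "nat \<Rightarrow> nat \<Rightarrow> (nat \<times> nat) gvert set" where
  "G1_V l k = gadget_V k (poc_V k l) (poc_arcs k l tau1)"
definition G1_E :: "nat \<Rightarrow> nat \<Rightarrow> (nat \<times> nat) gvert set set" where
  "G1_E l k = gadget_E k (poc_arcs k l tau1)"
definition G2_V :: "nat \<Rightarrow> nat \<Rightarrow> (nat \<Rightarrow> nat) \<Rightarrow> (nat \<times> nat) gvert set" where
  "G2_V l k \<sigma> = gadget_V k (poc_V k l) (poc_arcs k l (tau2 l \<sigma>))"
definition G2_E :: "nat \<Rightarrow> nat \<Rightarrow> (nat \<Rightarrow> nat) \<Rightarrow> (nat \<times> nat) gvert set set" where
  "G2_E l k \<sigma> = gadget_E k (poc_arcs k l (tau2 l \<sigma>))"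

end

theory Submission
  imports Defs
begin

lemma proper_imp_partial:
  assumes "proper_coloring c V E \<gamma>"
  shows "partial_coloring k c V E \<gamma>"
proof -
  have "\<And>v. {u \<in> nbrs E v. \<gamma> u \<noteq> \<gamma> v} = nbrs E v"
    using assms unfolding proper_coloring_def nbrs_def by auto
  then show ?thesis using assms unfolding partial_coloring_def proper_coloring_def deg_def by auto
qed

lemma partial_imp_proper:
  assumes "partial_coloring k c V E \<gamma>"
    and "\<And>x y. {x,y} \<in> E \<Longrightarrow> x \<noteq> y \<Longrightarrow> \<exists>w z. {w,z} = {x,y} \<and> w \<in> V \<and> finite (nbrs E w) \<and> deg E w \<le> k"
  shows "proper_coloring c V E \<gamma>"
  unfolding proper_coloring_def
proof (intro conjI allI impI)
  show "\<forall>v\<in>V. \<gamma> v \<in> {1..c}" using assms(1) unfolding partial_coloring_def by auto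
  fix x y assume xy: "{x, y} \<in> E \<and> x \<noteq> y"
  then obtain w z where wz: "{w,z} = {x,y}" "w \<in> V" "finite (nbrs E w)" "deg E w \<le> k" using assms(2) by blast
  note wV = wz(2)
  have "card {u \<in> nbrs E w. \<gamma> u \<noteq> \<gamma> w} \<ge> min k (deg E w)"
    using assms(1) wV unfolding partial_coloring_def by auto
  hence c: "card {u \<in> nbrs E w. \<gamma> u \<noteq> \<gamma> w} \<ge> card (nbrs E w)" using wz unfolding deg_def by auto
  have "{u \<in> nbrs E w. \<gamma> u \<noteq> \<gamma> w} = nbrs E w"
    by (rule card_subset_eq[OF wz(3)]) (use c card_mono[OF wz(3), of "{u \<in> nbrs E w. \<gamma> u \<noteq> \<gamma> w}"] in auto)
  moreover have "z \<in> nbrs E w" "w \<noteq> z" using xy wz unfolding nbrs_def by (auto simp: doubleton_eq_iff insert_commute)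
  ultimately have "\<gamma> z \<noteq> \<gamma> w" by blast
  then show "\<gamma> x \<noteq> \<gamma> y" using wz by (auto simp: doubleton_eq_iff)
qed

lemma gad_nbrs:
  assumes "(u,v) \<in> D" "j \<in> {1..k}"
  shows "nbrs (gadget_E k D) (Gad u v j) = Gad u v ` ({1..k}-{j}) \<union> {if j < k then Orig u else Orig v}"
proof (rule equalityI; rule subsetI)
  fix x assume "x \<in> nbrs (gadget_E k D) (Gad u v j)"
  then have x: "{x, Gad u v j} \<in> gadget_E k D" "x \<noteq> Gad u v j" unfolding nbrs_def by auto
  from x(1) show "x \<in> Gad u v ` ({1..k}-{j}) \<union> {if j < k then Orig u else Orig v}"
    unfolding gadget_E_def
  proof (elim UnE CollectE exE conjE)
    fix a b i i' assume "{x, Gad u v j} = {Gad a b i, Gad a b i'}" "i \<in> {1..k}" "i' \<in> {1..k}" "i \<noteq> i'"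
    then show ?thesis using x(2) by (auto simp: doubleton_eq_iff)
  next
    fix a b i assume "{x, Gad u v j} = {Orig a, Gad a b i}" "i \<in> {1..k-1}"
    then show ?thesis using assms by (auto simp: doubleton_eq_iff)
  next
    fix a b assume "{x, Gad u v j} = {Orig b, Gad a b k}"
    then show ?thesis using assms by (auto simp: doubleton_eq_iff)
  qed
next
  fix x assume "x \<in> Gad u v ` ({1..k}-{j}) \<union> {if j < k then Orig u else Orig v}"
  then consider (g) i where "x = Gad u v i" "i \<in> {1..k}" "i \<noteq> j" | (o1) "j < k" "x = Orig u" | (o2) "\<not> j < k" "x = Orig v"
    by (cases "j < k") force+
  then show "x \<in> nbrs (gadget_E k D) (Gad u v j)"
  proof cases
    case g
    then have "{x, Gad u v j} \<in> {{Gad a b i, Gad a b i'} | a b i i'. (a,b) \<in> D \<and> i \<in> {1..k} \<and> i' \<in> {1..k} \<and> i \<noteq> i'}"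
      using assms by blast
    then show ?thesis using g unfolding nbrs_def gadget_E_def by auto
  next
    case o1
    then have "{x, Gad u v j} \<in> {{Orig a, Gad a b i} | a b i. (a,b) \<in> D \<and> i \<in> {1..k-1}}"
      using assms by (intro CollectI exI[of _ u] exI[of _ v] exI[of _ j]) auto
    then show ?thesis using o1 unfolding nbrs_def gadget_E_def by auto
  next
    case o2
    then have "{x, Gad u v j} \<in> {{Orig b, Gad a b k} | a b. (a,b) \<in> D}"
      using assms by auto
    then show ?thesis using o2 unfolding nbrs_def gadget_E_def by auto
  qed
qed

lemma gad_deg:
  assumes "(u,v) \<in> D" "j \<in> {1..k}"
  shows "deg (gadget_E k D) (Gad u v j) = k" "finite (nbrs (gadget_E k D) (Gad u v j))"
proof -
  have inj: "inj_on (Gad u v) A" for A by (simp add: inj_on_def)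
  have c1: "card (Gad u v ` ({1..k}-{j})) = k - 1"
    using assms by (simp add: card_image[OF inj])
  have nin: "(if j < k then Orig u else Orig v) \<notin> Gad u v ` ({1..k}-{j})" by (simp add: image_iff)
  have "card (Gad u v ` ({1..k}-{j}) \<union> {if j < k then Orig u else Orig v}) = k - 1 + 1"
    using nin c1 by (simp add: card_insert_if)
  then show "deg (gadget_E k D) (Gad u v j) = k" using assms
    unfolding deg_def gad_nbrs[OF assms] by simp
  show "finite (nbrs (gadget_E k D) (Gad u v j))" unfolding gad_nbrs[OF assms] by simp
qed

lemma gad_edgeE:
  assumes "{x,y} \<in> gadget_E k D" "k \<ge> 1"
  obtains u v j z where "{Gad u v j, z} = {x,y}" "(u,v) \<in> D" "j \<in> {1..k}"
  using assms(1) unfolding gadget_E_def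
proof (elim UnE CollectE exE conjE)
  fix a b i i' assume "{x, y} = {Gad a b i, Gad a b i'}" "(a,b) \<in> D" "i \<in> {1..k}"
  then show thesis using that[of a b i "Gad a b i'"] by simp
next
  fix a b i assume "{x, y} = {Orig a, Gad a b i}" "(a,b) \<in> D" "i \<in> {1..k-1}"
  then show thesis using that[of a b i "Orig a"] by (auto simp: insert_commute)
next
  fix a b assume "{x, y} = {Orig b, Gad a b k}" "(a,b) \<in> D"
  then show thesis using that[of a b k "Orig b"] assms(2) by (auto simp: insert_commute)
qed

lemma gadget_partial_imp_proper:
  assumes "partial_coloring k c (gadget_V k V D) (gadget_E k D) \<gamma>" "k \<ge> 1"
  shows "proper_coloring c (gadget_V k V D) (gadget_E k D) \<gamma>"
proof (rule partial_imp_proper[OF assms(1)])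
  fix x y assume "{x,y} \<in> gadget_E k D"
  then obtain u v j z where "{Gad u v j,z} = {x,y}" "(u,v) \<in> D" "j \<in> {1..k}"
    by (rule gad_edgeE) (use assms in auto)
  then show "\<exists>w z. {w,z} = {x,y} \<and> w \<in> gadget_V k V D \<and> finite (nbrs (gadget_E k D) w) \<and> deg (gadget_E k D) w \<le> k"
  proof (intro exI conjI)
    show "{Gad u v j, z} = {x, y}" by fact
    show "Gad u v j \<in> gadget_V k V D" using \<open>(u,v) \<in> D\<close> \<open>j \<in> {1..k}\<close> unfolding gadget_V_def by blast
    show "finite (nbrs (gadget_E k D) (Gad u v j))" "deg (gadget_E k D) (Gad u v j) \<le> k"
      using gad_deg[OF \<open>(u,v) \<in> D\<close> \<open>j \<in> {1..k}\<close>] by auto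
  qed
qed

lemma gadget_Delta:
  assumes "(u,v) \<in> D" "k \<ge> 2"
  shows "Delta_E (gadget_E k D) = k"
proof -
  let ?E = "gadget_E k D"
  let ?S = "{min (deg ?E x) (deg ?E y) | x y. {x, y} \<in> ?E \<and> x \<noteq> y}"
  have le: "s \<le> k" if "s \<in> ?S" for s
  proof -
    from that obtain x y where s: "s = min (deg ?E x) (deg ?E y)" "{x,y} \<in> ?E" by blast
    from s(2) obtain u' v' j z where "{Gad u' v' j,z} = {x,y}" "(u',v') \<in> D" "j \<in> {1..k}"
      by (rule gad_edgeE) (use assms in auto)
    then have "s \<le> deg ?E (Gad u' v' j)" using s(1) by (auto simp: doubleton_eq_iff)
    then show ?thesis using gad_deg(1)[of u' v' D j k] \<open>(u',v') \<in> D\<close> \<open>j \<in> {1..k}\<close> by simp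
  qed
  have "{Gad u v 1, Gad u v 2} \<in> {{Gad a b j, Gad a b j'} | a b j j'. (a,b) \<in> D \<and> j \<in> {1..k} \<and> j' \<in> {1..k} \<and> j \<noteq> j'}"
    using assms by (intro CollectI exI[of _ u] exI[of _ v] exI[of _ 1] exI[of _ 2]) auto
  then have e: "{Gad u v 1, Gad u v 2} \<in> ?E" unfolding gadget_E_def by (intro UnI1)
  have d1: "deg ?E (Gad u v 1) = k" using assms by (intro gad_deg(1)) auto
  have d2: "deg ?E (Gad u v 2) = k" using assms by (intro gad_deg(1)) auto
  have n: "Gad u v 1 \<noteq> Gad u v 2" by simp
  have m: "k = min (deg ?E (Gad u v 1)) (deg ?E (Gad u v 2))" unfolding d1 d2 by simp
  have "k \<in> ?S"
    by (rule CollectI, rule exI[of _ "Gad u v 1"], rule exI[of _ "Gad u v 2"], intro conjI m e n)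
  then have kS: "k \<in> ?S" .
  have sub: "?S \<subseteq> {..k}"
  proof (rule subsetI)
    fix s assume "s \<in> ?S" then show "s \<in> {..k}" using le[of s] by simp
  qed
  have fin: "finite ?S" by (rule finite_subset[OF sub finite_atMost])
  show ?thesis unfolding Delta_E_def by (rule Max_eqI[OF fin le kS])

qed

fun gcol :: "nat \<Rightarrow> ('v \<Rightarrow> nat) \<Rightarrow> 'v gvert \<Rightarrow> nat" where
  "gcol k c (Orig w) = c w"
| "gcol k c (Gad u v j) = (if j = k then c u else if j < c u then j else j + 1)"

lemma gadget_proper:
  assumes "\<forall>w\<in>V. c w \<in> {1..k}" "D \<subseteq> V \<times> V" "\<forall>(u,v)\<in>D. c u \<noteq> c v"
  shows "proper_coloring k (gadget_V k V D) (gadget_E k D) (gcol k c)"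
  unfolding proper_coloring_def
proof (intro conjI allI impI ballI)
  fix x assume "x \<in> gadget_V k V D"
  then show "gcol k c x \<in> {1..k}" unfolding gadget_V_def using assms(1,2) by fastforce
next
  fix x y assume xy: "{x, y} \<in> gadget_E k D \<and> x \<noteq> y"
  have key: "gcol k c x \<noteq> gcol k c y \<and> gcol k c y \<noteq> gcol k c x"
    using xy unfolding gadget_E_def
  proof (elim UnE CollectE exE conjE)
    fix a b i i' assume h: "{x, y} = {Gad a b i, Gad a b i'}" "(a,b) \<in> D" "i \<in> {1..k}" "i' \<in> {1..k}" "i \<noteq> i'"
    have "gcol k c (Gad a b i) \<noteq> gcol k c (Gad a b i')" using h by auto
    then show ?thesis using h(1) by (auto simp: doubleton_eq_iff)
  next
    fix a b i assume h: "{x, y} = {Orig a, Gad a b i}" "(a,b) \<in> D" "i \<in> {1..k-1}"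
    have "gcol k c (Orig a) \<noteq> gcol k c (Gad a b i)" using h by auto
    then show ?thesis using h(1) by (auto simp: doubleton_eq_iff)
  next
    fix a b assume h: "{x, y} = {Orig b, Gad a b k}" "(a,b) \<in> D"
    have "gcol k c (Orig b) \<noteq> gcol k c (Gad a b k)" using h assms(3) by auto
    then show ?thesis using h(1) by (auto simp: doubleton_eq_iff)
  qed
  then show "gcol k c x \<noteq> gcol k c y" by blast
qed

lemma poc_sub: "poc_arcs k l \<tau> \<subseteq> poc_V k l \<times> poc_V k l"
  unfolding poc_arcs_def poc_V_def by auto

lemma poc_arc_ex: "k \<ge> 2 \<Longrightarrow> l \<ge> 1 \<Longrightarrow> ((1,1),(2,1)) \<in> poc_arcs k l \<tau>"
  unfolding poc_arcs_def by auto

lemma G1_col: "\<forall>(u,v)\<in>poc_arcs k l tau1. fst u \<noteq> fst v"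
  unfolding poc_arcs_def tau1_def by auto

definition c2 :: "nat \<Rightarrow> (nat \<Rightarrow> nat) \<Rightarrow> nat \<times> nat \<Rightarrow> nat" where
  "c2 l \<sigma> = (\<lambda>(a,i). if i \<le> l div 2 then a else inv \<sigma> a)"

lemma G2_col:
  assumes "\<sigma> permutes {1..k}"
  shows "\<forall>(u,v)\<in>poc_arcs k l (tau2 l \<sigma>). c2 l \<sigma> u \<noteq> c2 l \<sigma> v"
    "\<forall>w\<in>poc_V k l. c2 l \<sigma> w \<in> {1..k}"
proof -
  have inj: "inj (inv \<sigma>)" using permutes_inj[OF permutes_inv[OF assms]] .
  have inv1: "inv \<sigma> b = a \<Longrightarrow> b = \<sigma> a" for a b
    using permutes_inverses(1)[OF assms] by metis
  show "\<forall>(u,v)\<in>poc_arcs k l (tau2 l \<sigma>). c2 l \<sigma> u \<noteq> c2 l \<sigma> v"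
    unfolding poc_arcs_def tau2_def c2_def
    using permutes_inverses(1)[OF assms]
    by (auto simp: inj_eq[OF inj] split: if_splits dest: inv1)
  show "\<forall>w\<in>poc_V k l. c2 l \<sigma> w \<in> {1..k}"
    unfolding poc_V_def c2_def using permutes_in_image[OF permutes_inv[OF assms]] by auto
qed

theorem mainTheorem10:
  fixes k l :: nat and \<sigma> :: "nat \<Rightarrow> nat"
  assumes "k \<ge> 3" and "l \<ge> 2" and "even l"
    and "\<sigma> permutes {1..k}" and "\<sigma> \<noteq> id"
  shows "(\<exists>\<gamma>. proper_coloring k (G1_V l k) (G1_E l k) \<gamma>)
       \<and> (\<exists>\<gamma>. proper_coloring k (G2_V l k \<sigma>) (G2_E l k \<sigma>) \<gamma>)
       \<and> (\<exists>\<gamma>. partial_coloring k k (G1_V l k) (G1_E l k) \<gamma>)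
       \<and> (\<exists>\<gamma>. partial_coloring k k (G2_V l k \<sigma>) (G2_E l k \<sigma>) \<gamma>)
       \<and> Delta_E (G1_E l k) = k \<and> Delta_E (G2_E l k \<sigma>) = k
       \<and> (\<forall>\<gamma>. partial_coloring k k (G1_V l k) (G1_E l k) \<gamma>
               \<longrightarrow> proper_coloring k (G1_V l k) (G1_E l k) \<gamma>)
       \<and> (\<forall>\<gamma>. partial_coloring k k (G2_V l k \<sigma>) (G2_E l k \<sigma>) \<gamma>
               \<longrightarrow> proper_coloring k (G2_V l k \<sigma>) (G2_E l k \<sigma>) \<gamma>)"
proof -
  have p1: "proper_coloring k (G1_V l k) (G1_E l k) (gcol k fst)"
    unfolding G1_V_def G1_E_def
    by (rule gadget_proper[OF _ poc_sub G1_col]) (auto simp: poc_V_def)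
  have p2: "proper_coloring k (G2_V l k \<sigma>) (G2_E l k \<sigma>) (gcol k (c2 l \<sigma>))"
    unfolding G2_V_def G2_E_def
    by (rule gadget_proper[OF G2_col(2)[OF assms(4)] poc_sub G2_col(1)[OF assms(4)]])
  have arc: "((1,1),(2,1)) \<in> poc_arcs k l \<tau>" for \<tau> using assms(1,2) by (intro poc_arc_ex) auto
  have d1: "Delta_E (G1_E l k) = k" unfolding G1_E_def using arc assms(1) by (intro gadget_Delta) auto
  have d2: "Delta_E (G2_E l k \<sigma>) = k" unfolding G2_E_def using arc assms(1) by (intro gadget_Delta) auto
  have k1: "k \<ge> 1" using assms(1) by simp
  show ?thesis
    using p1 p2 proper_imp_partial[OF p1] proper_imp_partial[OF p2] d1 d2
      gadget_partial_imp_proper[OF _ k1]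
    unfolding G1_V_def G1_E_def G2_V_def G2_E_def by blast
qed
end
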